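(* Let $\gamma_1\in\Gamma/\Psi$. The graded module $\mathrm{gr}_{\mathcal F(\gamma_1)}\mathcal P_{\gamma_1}/\mathcal P_{\gamma_1}^+=\bigoplus_{\gamma\in q^{-1}(\gamma_1)}\mathcal P_\gamma/\mathcal P_\gamma^+$ is a finitely generated module over $\mathrm{gr}_{\bar\nu}R/P=\bigoplus_{\delta\in\Psi,\ \delta\ge 0}\mathcal P_\delta/\mathcal P_\delta^+$ if and only if the set $$F_{\gamma_1}=\{\nu(f)\mid f\in R,\ \nu_1(f)=\gamma_1\}$$ is a finitely generated module over the semigroup $\bar F=\bar\nu\big((R/P)\setminus\{0\}\big)$.
   Context: Let $(R,m)$ be a noetherian local domain with residue field $K$, and let $\nu$ be a valuation of the fraction field of $R$ with valuation ring $(R_\nu,m_\nu)$ such that $R\subset R_\nu$, $m_\nu\cap R=m$, and the residual map $R/m\to R_\nu/m_\nu$ is an isomorphism. Let $\Gamma$ be the value group of $\nu$, assumed of finite rank, let $\Psi\subset\Gamma$ be the smallest nonzero convex subgroup (the convex subgroup of rank one), and let $q\colon\Gamma\to\Gamma/\Psi$ be the quotient map. Let $\nu_1=q\circ\nu$ be the valuation (with values in $\Gamma/\Psi$) with which $\nu$ is composed, let $P=\{f\in R\mid \nu_1(f)>0\}$ be its center on $R$, and let $\bar\nu$ be the residual valuation on $R/P$, given by $\bar\nu(f \bmod P)=\nu(f)\in\Psi$ for $f\in R\setminus P$. For $\gamma\in\Gamma$ put $\mathcal P_\gamma=\{f\in R\mid\nu(f)\ge\gamma\}$, $\mathcal P_\gamma^+=\{f\in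 R\mid \nu(f)>\gamma\}$; for $\gamma_1\in\Gamma/\Psi$ put $\mathcal P_{\gamma_1}=\{f\in R\mid \nu_1(f)\ge\gamma_1\}$, $\mathcal P_{\gamma_1}^+=\{f\in R\mid\nu_1(f)>\gamma_1\}$. The ring $\mathrm{gr}_{\bar\nu}R/P=\bigoplus_{\delta\in\Psi,\delta\ge0}\mathcal P_\delta/\mathcal P_\delta^+$ is the graded ring of $R/P$ for $\bar\nu$, and $\bigoplus_{\gamma\in q^{-1}(\gamma_1)}\mathcal P_\gamma/\mathcal P_\gamma^+$ (the graded module associated to the filtration of $\mathcal P_{\gamma_1}/\mathcal P^+_{\gamma_1}$ by the images of the $\mathcal P_\gamma$, $\gamma\in q^{-1}(\gamma_1)$) is a graded module over it via the multiplication maps $\mathcal P_\delta/\mathcal P_\delta^+\times\mathcal P_\gamma/\mathcal P_\gamma^+\to\mathcal P_{\delta+\gamma}/\mathcal P_{\delta+\gamma}^+$. If $S$ is a commutative semigroup, a subset $F$ of $\Gamma$ with $S+F\subseteq F$ is an $S$-module; it is finitely generated if there are $m_1,\dots,m_k\in F$ with $F=\bigcup_{i=1}^k(S+m_i)$. *)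

theory Defs
  imports Main
begin

definition is_ideal :: "'a::comm_ring_1 set \<Rightarrow> bool" where
  "is_ideal I \<longleftrightarrow> 0 \<in> I \<and> (\<forall>x\<in>I. \<forall>y\<in>I. x + y \<in> I) \<and> (\<forall>r. \<forall>x\<in>I. r * x \<in> I)"

definition ideal_gen :: "'a::comm_ring_1 set \<Rightarrow> 'a set" where
  "ideal_gen S = {\<Sum>s\<in>S. c s * s | c. True}"

definition noetherian_ring :: "'a::comm_ring_1 itself \<Rightarrow> bool" where
  "noetherian_ring _ \<longleftrightarrow> (\<forall>I::'a set. is_ideal I \<longrightarrow> (\<exists>S. finite S \<and> I = ideal_gen S))"

definition local_ring :: "'a::comm_ring_1 itself \<Rightarrow> bool" where
  "local_ring _ \<longleftrightarrow> is_ideal {x::'a. \<not> x dvd 1}"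

text \<open>nu is the valuation of the fraction field of R restricted to R - {0}
  (the value at 0, i.e. infinity, is never used).  The value group is the whole type 'g.\<close>
definition valuation_on_ring :: "('a::idom \<Rightarrow> 'g::linordered_ab_group_add) \<Rightarrow> bool" where
  "valuation_on_ring \<nu> \<longleftrightarrow>
     (\<forall>f g. f \<noteq> 0 \<longrightarrow> g \<noteq> 0 \<longrightarrow> \<nu> (f * g) = \<nu> f + \<nu> g) \<and>
     (\<forall>f g. f \<noteq> 0 \<longrightarrow> g \<noteq> 0 \<longrightarrow> f + g \<noteq> 0 \<longrightarrow> min (\<nu> f) (\<nu> g) \<le> \<nu> (f + g))"

text \<open>The value group of nu (on Frac R) is the whole of 'g: every value is nu(f/g).\<close>
definition value_group_all :: "('a::idom \<Rightarrow> 'g::linordered_ab_group_add) \<Rightarrow> bool" where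
  "value_group_all \<nu> \<longleftrightarrow> (\<forall>\<gamma>. \<exists>f g. f \<noteq> 0 \<and> g \<noteq> 0 \<and> \<gamma> = \<nu> f - \<nu> g)"

text \<open>R is contained in R_nu and m_nu \<inter> R = m (the non-units of the local ring R).\<close>
definition centered_on_max :: "('a::idom \<Rightarrow> 'g::linordered_ab_group_add) \<Rightarrow> bool" where
  "centered_on_max \<nu> \<longleftrightarrow> (\<forall>f. f \<noteq> 0 \<longrightarrow> 0 \<le> \<nu> f \<and> (0 < \<nu> f \<longleftrightarrow> \<not> f dvd 1))"

text \<open>The residual map R/m \<rightarrow> R_nu/m_nu is onto (injectivity follows from m_nu \<inter> R = m):
  every element f/g of Frac R with value 0 is congruent modulo m_nu to some r in R.\<close>
definition residually_rational :: "('a::idom \<Rightarrow> 'g::linordered_ab_group_add) \<Rightarrow> bool" where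
  "residually_rational \<nu> \<longleftrightarrow>
     (\<forall>f g. f \<noteq> 0 \<longrightarrow> g \<noteq> 0 \<longrightarrow> \<nu> f = \<nu> g \<longrightarrow>
        (\<exists>r. f - r * g = 0 \<or> \<nu> g < \<nu> (f - r * g)))"

definition convex_subgroup :: "'g::linordered_ab_group_add set \<Rightarrow> bool" where
  "convex_subgroup H \<longleftrightarrow> 0 \<in> H \<and> (\<forall>x\<in>H. \<forall>y\<in>H. x + y \<in> H) \<and> (\<forall>x\<in>H. - x \<in> H) \<and>
     (\<forall>x y z. x \<in> H \<longrightarrow> z \<in> H \<longrightarrow> x \<le> y \<longrightarrow> y \<le> z \<longrightarrow> y \<in> H)"

definition finite_rank :: "'g::linordered_ab_group_add itself \<Rightarrow> bool" where
  "finite_rank _ \<longleftrightarrow> finite {H::'g set. convex_subgroup H}"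

definition smallest_nonzero_convex :: "'g::linordered_ab_group_add set \<Rightarrow> bool" where
  "smallest_nonzero_convex \<Psi> \<longleftrightarrow> convex_subgroup \<Psi> \<and> \<Psi> \<noteq> {0} \<and>
     (\<forall>H. convex_subgroup H \<longrightarrow> H \<noteq> {0} \<longrightarrow> \<Psi> \<subseteq> H)"

definition Pge :: "('a::idom \<Rightarrow> 'g::linordered_ab_group_add) \<Rightarrow> 'g \<Rightarrow> 'a set" where
  "Pge \<nu> \<gamma> = {f. f = 0 \<or> \<gamma> \<le> \<nu> f}"

definition Pgt :: "('a::idom \<Rightarrow> 'g::linordered_ab_group_add) \<Rightarrow> 'g \<Rightarrow> 'a set" where
  "Pgt \<nu> \<gamma> = {f. f = 0 \<or> \<gamma> < \<nu> f}"

text \<open>An element of  gr_{nubar} R/P = (+)_{delta in Psi, delta >= 0} P_delta/P_delta^+  is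
  represented by a finitely supported family a with a delta in P_delta, supported on
  Psi_{>=0}; the element is the sum of the classes of a delta in P_delta/P_delta^+.\<close>
definition gr_ring_reps :: "('a::idom \<Rightarrow> 'g::linordered_ab_group_add) \<Rightarrow> 'g set \<Rightarrow> ('g \<Rightarrow> 'a) set" where
  "gr_ring_reps \<nu> \<Psi> = {a. finite {\<delta>. a \<delta> \<noteq> 0} \<and>
      (\<forall>\<delta>. a \<delta> \<noteq> 0 \<longrightarrow> \<delta> \<in> \<Psi> \<and> 0 \<le> \<delta> \<and> a \<delta> \<in> Pge \<nu> \<delta>)}"

text \<open>An element of  (+)_{gamma in q^{-1}(gamma1)} P_gamma/P_gamma^+, where gamma1 = q(gamma0),
  i.e. q^{-1}(gamma1) = gamma0 + Psi, is represented likewise.\<close>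
definition gr_mod_reps :: "('a::idom \<Rightarrow> 'g::linordered_ab_group_add) \<Rightarrow> 'g set \<Rightarrow> 'g \<Rightarrow> ('g \<Rightarrow> 'a) set" where
  "gr_mod_reps \<nu> \<Psi> \<gamma>0 = {c. finite {\<gamma>. c \<gamma> \<noteq> 0} \<and>
      (\<forall>\<gamma>. c \<gamma> \<noteq> 0 \<longrightarrow> \<gamma> - \<gamma>0 \<in> \<Psi> \<and> c \<gamma> \<in> Pge \<nu> \<gamma>)}"

text \<open>Two representatives give the same element iff they agree componentwise modulo P_gamma^+.\<close>
definition gr_eq :: "('a::idom \<Rightarrow> 'g::linordered_ab_group_add) \<Rightarrow> ('g \<Rightarrow> 'a) \<Rightarrow> ('g \<Rightarrow> 'a) \<Rightarrow> bool" where
  "gr_eq \<nu> c c' \<longleftrightarrow> (\<forall>\<gamma>. c \<gamma> - c' \<gamma> \<in> Pgt \<nu> \<gamma>)"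

text \<open>Module action induced by  P_delta/P_delta^+ x P_gamma/P_gamma^+ -> P_{delta+gamma}/P_{delta+gamma}^+.\<close>
definition gr_act :: "('g::linordered_ab_group_add \<Rightarrow> 'a::idom) \<Rightarrow> ('g \<Rightarrow> 'a) \<Rightarrow> ('g \<Rightarrow> 'a)" where
  "gr_act a c = (\<lambda>\<gamma>. \<Sum>\<delta>\<in>{\<delta>. a \<delta> \<noteq> 0}. a \<delta> * c (\<gamma> - \<delta>))"

definition gr_module_fg :: "('a::idom \<Rightarrow> 'g::linordered_ab_group_add) \<Rightarrow> 'g set \<Rightarrow> 'g \<Rightarrow> bool" where
  "gr_module_fg \<nu> \<Psi> \<gamma>0 \<longleftrightarrow>
     (\<exists>G. finite G \<and> G \<subseteq> gr_mod_reps \<nu> \<Psi> \<gamma>0 \<and>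
        (\<forall>c\<in>gr_mod_reps \<nu> \<Psi> \<gamma>0. \<exists>a. (\<forall>g\<in>G. a g \<in> gr_ring_reps \<nu> \<Psi>) \<and>
            gr_eq \<nu> c (\<lambda>\<gamma>. \<Sum>g\<in>G. gr_act (a g) g \<gamma>)))"

definition fg_semigroup_module :: "'g::ab_group_add set \<Rightarrow> 'g set \<Rightarrow> bool" where
  "fg_semigroup_module S F \<longleftrightarrow> (\<forall>s\<in>S. \<forall>x\<in>F. s + x \<in> F) \<and>
     (\<exists>M. finite M \<and> M \<subseteq> F \<and> F = {s + m | s m. s \<in> S \<and> m \<in> M})"

text \<open>Fbar = nubar((R/P) - {0}) = {nu f | f in R - P}; since nu >= 0 on R, f \<notin> P iff
  f \<noteq> 0 and nu f \<in> Psi.\<close>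
definition Fbar :: "('a::idom \<Rightarrow> 'g::linordered_ab_group_add) \<Rightarrow> 'g set \<Rightarrow> 'g set" where
  "Fbar \<nu> \<Psi> = {\<nu> f | f. f \<noteq> 0 \<and> \<nu> f \<in> \<Psi>}"

text \<open>F_{gamma1} = {nu f | f in R, nu_1 f = gamma1}, where gamma1 = q(gamma0).\<close>
definition F_level :: "('a::idom \<Rightarrow> 'g::linordered_ab_group_add) \<Rightarrow> 'g set \<Rightarrow> 'g \<Rightarrow> 'g set" where
  "F_level \<nu> \<Psi> \<gamma>0 = {\<nu> f | f. f \<noteq> 0 \<and> \<nu> f - \<gamma>0 \<in> \<Psi>}"

end

theory Submission
  imports Defs
begin

lemma Pgt_add:
  assumes val: "valuation_on_ring \<nu>"
    and x: "x \<in> Pgt \<nu> \<gamma>" and y: "y \<in> Pgt \<nu> \<gamma>"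
  shows "x + y \<in> Pgt \<nu> \<gamma>"
proof (cases "x = 0 \<or> y = 0 \<or> x + y = 0")
  case True then show ?thesis using x y by (auto simp: Pgt_def)
next
  case False
  then have "min (\<nu> x) (\<nu> y) \<le> \<nu> (x + y)" using val unfolding valuation_on_ring_def by blast
  moreover have "\<gamma> < \<nu> x" "\<gamma> < \<nu> y" using x y False by (auto simp: Pgt_def)
  ultimately have "\<gamma> < \<nu> (x + y)" by (simp add: min_def split: if_splits)
  then show ?thesis unfolding Pgt_def by blast
qed

lemma Pgt_sum:
  assumes val: "valuation_on_ring \<nu>"
  shows "finite A \<Longrightarrow> (\<And>i. i \<in> A \<Longrightarrow> f i \<in> Pgt \<nu> \<gamma>) \<Longrightarrow> sum f A \<in> Pgt \<nu> \<gamma>"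
proof (induction A rule: finite_induct)
  case empty then show ?case by (simp add: Pgt_def)
next
  case (insert a A) then show ?case using Pgt_add[OF val] by simp
qed

lemma ineq_split:
  fixes a b d x :: "'g::linordered_ab_group_add"
  assumes "d \<le> a" "x - d \<le> b" "a + b \<le> x"
  shows "a = d \<and> b = x - d"
proof -
  have "a + b \<ge> d + (x - d)" using assms(1,2) by (rule add_mono)
  then have e: "a + b = x" using assms(3) by simp
  have "a \<le> d" using e assms(2) by (metis add.commute add_le_cancel_left diff_add_cancel le_diff_eq)
  then show ?thesis using assms e by (metis antisym add_diff_cancel_left')
qed

theorem mainTheorem1:
  fixes \<nu> :: "'a::idom \<Rightarrow> 'g::linordered_ab_group_add"
    and \<Psi> :: "'g set"
    and \<gamma>0 :: 'g
  assumes noeth: "noetherian_ring TYPE('a)"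
    and loc: "local_ring TYPE('a)"
    and val: "valuation_on_ring \<nu>"
    and vgroup: "value_group_all \<nu>"
    and center: "centered_on_max \<nu>"
    and residue: "residually_rational \<nu>"
    and rank: "finite_rank TYPE('g)"
    and Psi: "smallest_nonzero_convex \<Psi>"
  shows "gr_module_fg \<nu> \<Psi> \<gamma>0 \<longleftrightarrow> fg_semigroup_module (Fbar \<nu> \<Psi>) (F_level \<nu> \<Psi> \<gamma>0)"
proof -
  have mult: "\<And>f g. f \<noteq> 0 \<Longrightarrow> g \<noteq> 0 \<Longrightarrow> \<nu> (f * g) = \<nu> f + \<nu> g"
    using val unfolding valuation_on_ring_def by blast
  have pos: "\<And>f. f \<noteq> 0 \<Longrightarrow> 0 \<le> \<nu> f" using center unfolding centered_on_max_def by blast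
  have cs: "convex_subgroup \<Psi>" using Psi unfolding smallest_nonzero_convex_def by blast
  have Psi_add: "\<And>x y. x \<in> \<Psi> \<Longrightarrow> y \<in> \<Psi> \<Longrightarrow> x + y \<in> \<Psi>"
    using cs unfolding convex_subgroup_def by blast
  have closure: "\<forall>s\<in>Fbar \<nu> \<Psi>. \<forall>x\<in>F_level \<nu> \<Psi> \<gamma>0. s + x \<in> F_level \<nu> \<Psi> \<gamma>0"
  proof (intro ballI)
    fix s x assume s: "s \<in> Fbar \<nu> \<Psi>" and x: "x \<in> F_level \<nu> \<Psi> \<gamma>0"
    obtain h where h: "h \<noteq> 0" "\<nu> h \<in> \<Psi>" "s = \<nu> h" using s unfolding Fbar_def by blast
    obtain f where f: "f \<noteq> 0" "\<nu> f - \<gamma>0 \<in> \<Psi>" "x = \<nu> f" using x unfolding F_level_def by blast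
    have "\<nu> (h * f) = s + x" using mult h f by simp
    moreover have "s + x - \<gamma>0 \<in> \<Psi>" using Psi_add[OF h(2) f(2)] h f by (simp add: algebra_simps)
    moreover have "h * f \<noteq> 0" using h f by simp
    ultimately have "s + x = \<nu> (h * f) \<and> h * f \<noteq> 0 \<and> \<nu> (h * f) - \<gamma>0 \<in> \<Psi>" by simp
    then show "s + x \<in> F_level \<nu> \<Psi> \<gamma>0" unfolding F_level_def by blast
  qed
  show ?thesis
  proof
    assume "gr_module_fg \<nu> \<Psi> \<gamma>0"
    then obtain G where G: "finite G" "G \<subseteq> gr_mod_reps \<nu> \<Psi> \<gamma>0"
      and Gc: "\<And>c. c \<in> gr_mod_reps \<nu> \<Psi> \<gamma>0 \<Longrightarrow> \<exists>a. (\<forall>g\<in>G. a g \<in> gr_ring_reps \<nu> \<Psi>) \<and>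
            gr_eq \<nu> c (\<lambda>\<gamma>. \<Sum>g\<in>G. gr_act (a g) g \<gamma>)"
      unfolding gr_module_fg_def by blast
    define M where "M = {\<gamma>. \<exists>g\<in>G. g \<gamma> \<noteq> 0 \<and> \<nu> (g \<gamma>) = \<gamma>}"
    have "M \<subseteq> (\<Union>g\<in>G. {\<gamma>. g \<gamma> \<noteq> 0})" unfolding M_def by blast
    moreover have "finite (\<Union>g\<in>G. {\<gamma>. g \<gamma> \<noteq> 0})"
      using G unfolding gr_mod_reps_def by blast
    ultimately have Mfin: "finite M" by (rule finite_subset)
    have MF: "M \<subseteq> F_level \<nu> \<Psi> \<gamma>0"
    proof
      fix \<gamma> assume "\<gamma> \<in> M"
      then obtain g where g: "g \<in> G" "g \<gamma> \<noteq> 0" "\<nu> (g \<gamma>) = \<gamma>" unfolding M_def by blast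
      then have "\<gamma> - \<gamma>0 \<in> \<Psi>" using G(2) unfolding gr_mod_reps_def by blast
      then show "\<gamma> \<in> F_level \<nu> \<Psi> \<gamma>0" unfolding F_level_def using g by force
    qed
    have "F_level \<nu> \<Psi> \<gamma>0 \<subseteq> {s + m | s m. s \<in> Fbar \<nu> \<Psi> \<and> m \<in> M}"
    proof
      fix x assume x: "x \<in> F_level \<nu> \<Psi> \<gamma>0"
      obtain f where f: "f \<noteq> 0" "\<nu> f - \<gamma>0 \<in> \<Psi>" "x = \<nu> f" using x unfolding F_level_def by blast
      define c where "c = (\<lambda>\<gamma>. if \<gamma> = x then f else 0)"
      have "{\<gamma>. c \<gamma> \<noteq> 0} \<subseteq> {x}" unfolding c_def by auto
      then have "c \<in> gr_mod_reps \<nu> \<Psi> \<gamma>0" unfolding gr_mod_reps_def Pge_def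
        using f by (auto simp: c_def intro: finite_subset)
      then obtain a where a: "\<forall>g\<in>G. a g \<in> gr_ring_reps \<nu> \<Psi>"
        and eq: "gr_eq \<nu> c (\<lambda>\<gamma>. \<Sum>g\<in>G. gr_act (a g) g \<gamma>)" using Gc by blast
      define T where "T = (\<Sum>g\<in>G. gr_act (a g) g x)"
      have "c x - (\<Sum>g\<in>G. gr_act (a g) g x) \<in> Pgt \<nu> x" using eq unfolding gr_eq_def by blast
      then have fT: "f - T \<in> Pgt \<nu> x" unfolding T_def c_def by simp
      have "\<exists>g\<in>G. \<exists>\<delta>\<in>{\<delta>. a g \<delta> \<noteq> 0}. a g \<delta> * g (x - \<delta>) \<notin> Pgt \<nu> x"
      proof (rule ccontr)
        assume "\<not> ?thesis"
        then have H: "\<And>g \<delta>. g \<in> G \<Longrightarrow> \<delta> \<in> {\<delta>. a g \<delta> \<noteq> 0} \<Longrightarrow> a g \<delta> * g (x - \<delta>) \<in> Pgt \<nu> x" by blast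
        have H2: "gr_act (a g) g x \<in> Pgt \<nu> x" if gG: "g \<in> G" for g
        proof -
          have fin: "finite {\<delta>. a g \<delta> \<noteq> 0}" using a gG unfolding gr_ring_reps_def by blast
          show ?thesis unfolding gr_act_def by (rule Pgt_sum[OF val fin]) (rule H[OF gG])
        qed
        have "T \<in> Pgt \<nu> x" unfolding T_def by (rule Pgt_sum[OF val G(1)]) (rule H2)
        then have "(f - T) + T \<in> Pgt \<nu> x" using Pgt_add[OF val fT] by blast
        then show False using f unfolding Pgt_def by simp
      qed
      then obtain g \<delta> where g: "g \<in> G" and ad: "a g \<delta> \<noteq> 0"
        and nt: "a g \<delta> * g (x - \<delta>) \<notin> Pgt \<nu> x" by blast
      have gx: "g (x - \<delta>) \<noteq> 0" using nt unfolding Pgt_def by auto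
      have le: "\<nu> (a g \<delta>) + \<nu> (g (x - \<delta>)) \<le> x" using nt mult[OF ad gx] unfolding Pgt_def by auto
      have ar: "\<delta> \<in> \<Psi>" "\<delta> \<le> \<nu> (a g \<delta>)" using a g ad unfolding gr_ring_reps_def Pge_def by auto
      have "x - \<delta> \<le> \<nu> (g (x - \<delta>))" using G(2) g gx unfolding gr_mod_reps_def Pge_def by auto
      with ar le have e: "\<nu> (a g \<delta>) = \<delta> \<and> \<nu> (g (x - \<delta>)) = x - \<delta>" using ineq_split by blast
      have "\<delta> \<in> Fbar \<nu> \<Psi>" unfolding Fbar_def using ad e ar by force
      moreover have "x - \<delta> \<in> M" unfolding M_def using g gx e by blast
      moreover have "x = \<delta> + (x - \<delta>)" by simp
      ultimately show "x \<in> {s + m | s m. s \<in> Fbar \<nu> \<Psi> \<and> m \<in> M}"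
        by blast
    qed
    moreover have "{s + m | s m. s \<in> Fbar \<nu> \<Psi> \<and> m \<in> M} \<subseteq> F_level \<nu> \<Psi> \<gamma>0"
      using closure MF by blast
    ultimately show "fg_semigroup_module (Fbar \<nu> \<Psi>) (F_level \<nu> \<Psi> \<gamma>0)"
      unfolding fg_semigroup_module_def using closure Mfin MF by blast
  next
    assume "fg_semigroup_module (Fbar \<nu> \<Psi>) (F_level \<nu> \<Psi> \<gamma>0)"
    then obtain M where Mfin: "finite M" and MF: "M \<subseteq> F_level \<nu> \<Psi> \<gamma>0"
      and Feq: "F_level \<nu> \<Psi> \<gamma>0 = {s + m | s m. s \<in> Fbar \<nu> \<Psi> \<and> m \<in> M}"
      unfolding fg_semigroup_module_def by blast
    have "\<forall>m\<in>M. \<exists>f. f \<noteq> 0 \<and> m - \<gamma>0 \<in> \<Psi> \<and> \<nu> f = m" using MF unfolding F_level_def by blast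
    then obtain fm where fm: "\<And>m. m \<in> M \<Longrightarrow> fm m \<noteq> 0 \<and> m - \<gamma>0 \<in> \<Psi> \<and> \<nu> (fm m) = m"
      by metis
    define gen where "gen m = (\<lambda>\<gamma>. if \<gamma> = m then fm m else 0)" for m
    have inj: "inj_on gen M"
    proof (rule inj_onI)
      fix m m' assume "m \<in> M" "m' \<in> M" "gen m = gen m'"
      then have "gen m m = gen m' m" by simp
      then show "m = m'" using fm \<open>m \<in> M\<close> unfolding gen_def by (auto split: if_splits)
    qed
    have genrep: "gen ` M \<subseteq> gr_mod_reps \<nu> \<Psi> \<gamma>0"
    proof
      fix g assume "g \<in> gen ` M"
      then obtain m where m: "m \<in> M" "g = gen m" by blast
      have "{\<gamma>. g \<gamma> \<noteq> 0} \<subseteq> {m}" using m unfolding gen_def by auto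
      then show "g \<in> gr_mod_reps \<nu> \<Psi> \<gamma>0" unfolding gr_mod_reps_def Pge_def
        using m fm[OF m(1)] by (auto simp: gen_def intro: finite_subset)
    qed
    show "gr_module_fg \<nu> \<Psi> \<gamma>0"
      unfolding gr_module_fg_def
    proof (intro exI[of _ "gen ` M"] conjI ballI)
      show "finite (gen ` M)" using Mfin by simp
      show "gen ` M \<subseteq> gr_mod_reps \<nu> \<Psi> \<gamma>0" by (rule genrep)
      fix c assume c: "c \<in> gr_mod_reps \<nu> \<Psi> \<gamma>0"
      define K where "K = {\<gamma>. c \<gamma> \<noteq> 0 \<and> \<nu> (c \<gamma>) = \<gamma>}"
      have Kfin: "finite K" using c unfolding gr_mod_reps_def K_def by (auto intro: finite_subset)
      have "\<forall>\<gamma>\<in>K. \<exists>p. fst p \<in> M \<and> fst (snd p) \<noteq> 0 \<and> \<nu> (fst (snd p)) \<in> \<Psi> \<and>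
          \<gamma> = \<nu> (fst (snd p)) + fst p \<and>
          (c \<gamma> - snd (snd p) * (fst (snd p) * fm (fst p)) = 0 \<or>
           \<nu> (fst (snd p) * fm (fst p)) < \<nu> (c \<gamma> - snd (snd p) * (fst (snd p) * fm (fst p))))"
      proof
        fix \<gamma> assume "\<gamma> \<in> K"
        then have k: "c \<gamma> \<noteq> 0" "\<nu> (c \<gamma>) = \<gamma>" unfolding K_def by auto
        then have "\<gamma> - \<gamma>0 \<in> \<Psi>" using c unfolding gr_mod_reps_def by blast
        then have "\<gamma> \<in> F_level \<nu> \<Psi> \<gamma>0" unfolding F_level_def using k by force
        then obtain s m where sm: "s \<in> Fbar \<nu> \<Psi>" "m \<in> M" "\<gamma> = s + m" using Feq by blast
        obtain h where h: "h \<noteq> 0" "\<nu> h \<in> \<Psi>" "s = \<nu> h" using sm(1) unfolding Fbar_def by blast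
        have hf: "h * fm m \<noteq> 0" using h fm[OF sm(2)] by simp
        have "\<nu> (h * fm m) = \<gamma>" using mult[OF h(1)] fm[OF sm(2)] h sm by simp
        then have eqv: "\<nu> (c \<gamma>) = \<nu> (h * fm m)" using k by simp
        have R: "\<forall>f g. f \<noteq> 0 \<longrightarrow> g \<noteq> 0 \<longrightarrow> \<nu> f = \<nu> g \<longrightarrow>
            (\<exists>r. f - r * g = 0 \<or> \<nu> g < \<nu> (f - r * g))"
          using residue unfolding residually_rational_def by blast
        from R[rule_format, OF k(1) hf eqv] obtain r where
          "c \<gamma> - r * (h * fm m) = 0 \<or> \<nu> (h * fm m) < \<nu> (c \<gamma> - r * (h * fm m))" by blast
        then show "\<exists>p. fst p \<in> M \<and> fst (snd p) \<noteq> 0 \<and> \<nu> (fst (snd p)) \<in> \<Psi> \<and>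
          \<gamma> = \<nu> (fst (snd p)) + fst p \<and>
          (c \<gamma> - snd (snd p) * (fst (snd p) * fm (fst p)) = 0 \<or>
           \<nu> (fst (snd p) * fm (fst p)) < \<nu> (c \<gamma> - snd (snd p) * (fst (snd p) * fm (fst p))))"
          using sm h by (intro exI[of _ "(m, h, r)"]) auto
      qed
      then obtain p where p: "\<And>\<gamma>. \<gamma> \<in> K \<Longrightarrow> fst (p \<gamma>) \<in> M \<and> fst (snd (p \<gamma>)) \<noteq> 0 \<and> \<nu> (fst (snd (p \<gamma>))) \<in> \<Psi> \<and>
          \<gamma> = \<nu> (fst (snd (p \<gamma>))) + fst (p \<gamma>) \<and>
          (c \<gamma> - snd (snd (p \<gamma>)) * (fst (snd (p \<gamma>)) * fm (fst (p \<gamma>))) = 0 \<or>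
           \<nu> (fst (snd (p \<gamma>)) * fm (fst (p \<gamma>))) < \<nu> (c \<gamma> - snd (snd (p \<gamma>)) * (fst (snd (p \<gamma>)) * fm (fst (p \<gamma>)))))"
        by metis
      define mch where "mch \<gamma> = fst (p \<gamma>)" for \<gamma>
      define hh where "hh \<gamma> = fst (snd (p \<gamma>))" for \<gamma>
      define rr where "rr \<gamma> = snd (snd (p \<gamma>))" for \<gamma>
      have pK: "\<And>\<gamma>. \<gamma> \<in> K \<Longrightarrow> mch \<gamma> \<in> M \<and> hh \<gamma> \<noteq> 0 \<and> \<nu> (hh \<gamma>) \<in> \<Psi> \<and> \<gamma> = \<nu> (hh \<gamma>) + mch \<gamma> \<and>
          (c \<gamma> - rr \<gamma> * (hh \<gamma> * fm (mch \<gamma>)) = 0 \<or>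
           \<nu> (hh \<gamma> * fm (mch \<gamma>)) < \<nu> (c \<gamma> - rr \<gamma> * (hh \<gamma> * fm (mch \<gamma>))))"
        using p unfolding mch_def hh_def rr_def by blast
      define A where "A m \<delta> = (if \<delta> + m \<in> K \<and> mch (\<delta> + m) = m then rr (\<delta> + m) * hh (\<delta> + m) else 0)" for m \<delta>
      define a where "a g = A (inv_into M gen g)" for g
      have aA: "\<And>m. m \<in> M \<Longrightarrow> a (gen m) = A m" unfolding a_def using inj by simp
      have Afin: "finite {\<delta>. A m \<delta> \<noteq> 0}" for m
      proof -
        have "{\<delta>. A m \<delta> \<noteq> 0} \<subseteq> (\<lambda>\<gamma>. \<gamma> - m) ` K" unfolding A_def
          by (auto split: if_splits intro!: image_eqI)
        then show ?thesis using Kfin by (meson finite_imageI finite_subset)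
      qed
      have ring: "\<forall>g\<in>gen ` M. a g \<in> gr_ring_reps \<nu> \<Psi>"
      proof
        fix g assume "g \<in> gen ` M"
        then obtain m where m: "m \<in> M" "g = gen m" by blast
        have "\<And>\<delta>. A m \<delta> \<noteq> 0 \<Longrightarrow> \<delta> \<in> \<Psi> \<and> 0 \<le> \<delta> \<and> A m \<delta> \<in> Pge \<nu> \<delta>"
        proof -
          fix \<delta> assume nz: "A m \<delta> \<noteq> 0"
          then have k: "\<delta> + m \<in> K" "mch (\<delta> + m) = m" unfolding A_def by (auto split: if_splits)
          have d: "\<delta> = \<nu> (hh (\<delta> + m))" using pK[OF k(1)] k(2)
            by (metis add_right_cancel)
          have r: "rr (\<delta> + m) \<noteq> 0" using nz unfolding A_def by (auto split: if_splits)
          have "\<nu> (rr (\<delta> + m) * hh (\<delta> + m)) = \<nu> (rr (\<delta> + m)) + \<nu> (hh (\<delta> + m))"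
            using mult r pK[OF k(1)] by blast
          moreover have "0 \<le> \<nu> (rr (\<delta> + m))" using pos r by blast
          ultimately have "\<delta> \<le> \<nu> (A m \<delta>)" using d k unfolding A_def by simp
          moreover have "0 \<le> \<delta>" using d pos[of "hh (\<delta> + m)"] pK[OF k(1)] by simp
          ultimately show "\<delta> \<in> \<Psi> \<and> 0 \<le> \<delta> \<and> A m \<delta> \<in> Pge \<nu> \<delta>"
            using d pK[OF k(1)] unfolding Pge_def by auto
        qed
        then show "a g \<in> gr_ring_reps \<nu> \<Psi>" unfolding gr_ring_reps_def using aA m Afin by auto
      qed
      have act: "gr_act (A m) (gen m) \<gamma> = A m (\<gamma> - m) * fm m" if "m \<in> M" for m \<gamma>
      proof -
        have "gr_act (A m) (gen m) \<gamma> = (\<Sum>\<delta>\<in>{\<delta>. A m \<delta> \<noteq> 0}. if \<delta> = \<gamma> - m then A m \<delta> * fm m else 0)"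
          unfolding gr_act_def gen_def by (intro sum.cong) (auto simp: algebra_simps)
        also have "\<dots> = A m (\<gamma> - m) * fm m" using Afin[of m] by (subst sum.delta) auto
        finally show ?thesis .
      qed
      have tot: "(\<Sum>g\<in>gen ` M. gr_act (a g) g \<gamma>) =
          (if \<gamma> \<in> K then rr \<gamma> * hh \<gamma> * fm (mch \<gamma>) else 0)" for \<gamma>
      proof -
        have "(\<Sum>g\<in>gen ` M. gr_act (a g) g \<gamma>) = (\<Sum>m\<in>M. gr_act (a (gen m)) (gen m) \<gamma>)"
          using inj by (simp add: sum.reindex)
        also have "\<dots> = (\<Sum>m\<in>M. if m = mch \<gamma> then (if \<gamma> \<in> K then rr \<gamma> * hh \<gamma> * fm (mch \<gamma>) else 0) else 0)"
        proof (rule sum.cong[OF refl])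
          fix m assume mM: "m \<in> M"
          have "gr_act (a (gen m)) (gen m) \<gamma> = A m (\<gamma> - m) * fm m"
            using aA[OF mM] act[OF mM] by simp
          also have "\<dots> = (if \<gamma> \<in> K \<and> mch \<gamma> = m then rr \<gamma> * hh \<gamma> else 0) * fm m"
            unfolding A_def by simp
          finally show "gr_act (a (gen m)) (gen m) \<gamma> =
            (if m = mch \<gamma> then (if \<gamma> \<in> K then rr \<gamma> * hh \<gamma> * fm (mch \<gamma>) else 0) else 0)"
            by auto
        qed
        also have "\<dots> = (if \<gamma> \<in> K then rr \<gamma> * hh \<gamma> * fm (mch \<gamma>) else 0)"
          using Mfin pK by (subst sum.delta) auto
        finally show ?thesis .
      qed
      have geq: "gr_eq \<nu> c (\<lambda>\<gamma>. \<Sum>g\<in>gen ` M. gr_act (a g) g \<gamma>)"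
        unfolding gr_eq_def
      proof
        fix \<gamma>
        show "c \<gamma> - (\<Sum>g\<in>gen ` M. gr_act (a g) g \<gamma>) \<in> Pgt \<nu> \<gamma>"
        proof (cases "\<gamma> \<in> K")
          case True
          have pk: "mch \<gamma> \<in> M" "hh \<gamma> \<noteq> 0" "\<gamma> = \<nu> (hh \<gamma>) + mch \<gamma>" using pK[OF True] by auto
          have e: "\<nu> (hh \<gamma> * fm (mch \<gamma>)) = \<gamma>"
            using mult[of "hh \<gamma>" "fm (mch \<gamma>)"] fm[OF pk(1)] pk by simp
          show ?thesis using pK[OF True] e unfolding tot Pgt_def
            by (auto simp: True mult.assoc)
        next
          case False
          then have "c \<gamma> = 0 \<or> \<gamma> < \<nu> (c \<gamma>)" using c unfolding K_def gr_mod_reps_def Pge_def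
            by (auto simp: order_le_less)
          then show ?thesis unfolding tot Pgt_def using False by auto
        qed
      qed
      show "\<exists>a. (\<forall>g\<in>gen ` M. a g \<in> gr_ring_reps \<nu> \<Psi>) \<and>
            gr_eq \<nu> c (\<lambda>\<gamma>. \<Sum>g\<in>gen ` M. gr_act (a g) g \<gamma>)"
        using ring geq by blast
    qed
  qed
qed

end
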